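(* Let $(\sigma,f)$ and $(\tau,g)$ be generalized equivariant maps from $K\ltimes Y$ to $G\ltimes X$, namely $K\ltimes Y\xleftarrow{\sigma}K'\ltimes Y'\xrightarrow{f}G\ltimes X$ and $K\ltimes Y\xleftarrow{\tau}K''\ltimes Y''\xrightarrow{g}G\ltimes X$. If $(\sigma,f)\Rightarrow(\tau,g)$, then $(\sigma,f)$ and $(\tau,g)$ are homotopic.
   Context: Translation groupoids $G\ltimes X$ have objects $X$, arrows $G\times X$, and arrows $(g,x):x\to gx$; all groups are discrete and act properly. $X^I$ is the space of continuous paths $[0,1]\to X$ with the compact-open topology and pointwise $G$-action. For $i\in\{0,1\}$, $\mathrm{ev}_i:G\ltimes X^I\to G\ltimes X$ is the equivariant map $(g,\alpha)\mapsto(g,\alpha(i))$. A natural transformation $\phi\sim\psi$ between strict morphisms is a continuous $T:K_0\to G_1$ with $T(x):\phi(x)\to\psi(x)$ natural in arrows. An essential equivalence is a strict morphism $\epsilon:\mathcal K\to\mathcal G$ satisfying two conditions. (i) The map $G_1\times^t_{G_0}K_0\to G_0$, $(g,k)\mapsto s(g)$, is an open surjection. (ii) $K_1$ is the pullback of $(s,t):G_1\to G_0\times G_0$ along $\epsilon\times\epsilon$. A generalized equivariant map $\mathcal K\xleftarrow{\epsilon}\mathcal J\xrightarrow{\phi}\mathcal G$ is a span of equivariant maps of translation groupoids with $\epsilon$ an essential equivalence. Two such, $(\epsilon,\phi)$ and $(\epsilon',\phi')$, are $2$-isomorphic, written $(\epsilon,\phi)\Rightarrow(\epsilon',\phi')$,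 if there are a translation groupoid $\mathcal L$ and equivariant essential equivalences $u:\mathcal L\to\mathcal J$, $v:\mathcal L\to\mathcal J'$ with $\epsilon u\sim\epsilon'v$ and $\phi u\sim\phi'v$. Homotopy: generalized maps $(\sigma,f)$ and $(\tau,g)$ from $K\ltimes Y$ to $G\ltimes X$ are homotopic if there is a generalized equivariant map $K\ltimes Y\xleftarrow{\epsilon}\tilde K\ltimes\tilde Y\xrightarrow{H}G\ltimes X^I$ with $(\sigma,f)\Rightarrow(\epsilon,\mathrm{ev}_0\circ H)$ and $(\tau,g)\Rightarrow(\epsilon,\mathrm{ev}_1\circ H)$. *)

theory Defs
  imports "HOL-Analysis.Analysis" "HOL-Algebra.Group"
begin

text \<open>A translation groupoid G \<ltimes> X is bundled as (G, action, X): a (discrete) group G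
  (HOL-Algebra), an action map, and a topological space X.\<close>

type_synonym ('g,'x) tg = "'g monoid \<times> ('g \<Rightarrow> 'x \<Rightarrow> 'x) \<times> 'x topology"

definition grp :: "('g,'x) tg \<Rightarrow> 'g monoid" where "grp T = fst T"
definition act :: "('g,'x) tg \<Rightarrow> 'g \<Rightarrow> 'x \<Rightarrow> 'x" where "act T = fst (snd T)"
definition sp :: "('g,'x) tg \<Rightarrow> 'x topology" where "sp T = snd (snd T)"

definition obj :: "('g,'x) tg \<Rightarrow> 'x set" where "obj T = topspace (sp T)"
definition arr :: "('g,'x) tg \<Rightarrow> ('g \<times> 'x) set" where "arr T = carrier (grp T) \<times> obj T"
definition arr_top :: "('g,'x) tg \<Rightarrow> ('g \<times> 'x) topology" where
  "arr_top T = prod_topology (discrete_topology (carrier (grp T))) (sp T)"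
definition src :: "'g \<times> 'x \<Rightarrow> 'x" where "src a = snd a"
definition tgt :: "('g,'x) tg \<Rightarrow> 'g \<times> 'x \<Rightarrow> 'x" where "tgt T a = act T (fst a) (snd a)"
text \<open>comp T b a = b \<circ> a for a : x \<rightarrow> gx and b : gx \<rightarrow> hgx, namely (h,gx)\<circ>(g,x) = (hg,x).\<close>
definition comp :: "('g,'x) tg \<Rightarrow> 'g \<times> 'x \<Rightarrow> 'g \<times> 'x \<Rightarrow> 'g \<times> 'x" where
  "comp T b a = (fst b \<otimes>\<^bsub>grp T\<^esub> fst a, snd a)"

definition tgrpd :: "('g,'x) tg \<Rightarrow> bool" where
  "tgrpd T \<longleftrightarrow> group (grp T)
     \<and> (\<forall>x\<in>obj T. act T \<one>\<^bsub>grp T\<^esub> x = x)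
     \<and> (\<forall>g\<in>carrier (grp T). \<forall>h\<in>carrier (grp T). \<forall>x\<in>obj T.
           act T (g \<otimes>\<^bsub>grp T\<^esub> h) x = act T g (act T h x))
     \<and> (\<forall>g\<in>carrier (grp T). continuous_map (sp T) (sp T) (act T g))
     \<and> proper_map (arr_top T) (prod_topology (sp T) (sp T)) (\<lambda>a. (src a, tgt T a))"

type_synonym ('k,'y,'g,'x) emap = "('k \<Rightarrow> 'g) \<times> ('y \<Rightarrow> 'x)"

definition emap :: "('k,'y) tg \<Rightarrow> ('g,'x) tg \<Rightarrow> ('k,'y,'g,'x) emap \<Rightarrow> bool" where
  "emap K G m \<longleftrightarrow> fst m \<in> hom (grp K) (grp G)
     \<and> continuous_map (sp K) (sp G) (snd m)
     \<and> (\<forall>k\<in>carrier (grp K). \<forall>y\<in>obj K. snd m (act K k y) = act G (fst m k) (snd m y))"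

definition arr_map :: "('k,'y,'g,'x) emap \<Rightarrow> 'k \<times> 'y \<Rightarrow> 'g \<times> 'x" where
  "arr_map m a = (fst m (fst a), snd m (snd a))"

definition mcomp :: "('j,'z,'g,'x) emap \<Rightarrow> ('k,'y,'j,'z) emap \<Rightarrow> ('k,'y,'g,'x) emap" where
  "mcomp m n = (fst m \<circ> fst n, snd m \<circ> snd n)"

definition nat_trans :: "('k,'y) tg \<Rightarrow> ('g,'x) tg \<Rightarrow> ('k,'y,'g,'x) emap \<Rightarrow> ('k,'y,'g,'x) emap
     \<Rightarrow> ('y \<Rightarrow> 'g \<times> 'x) \<Rightarrow> bool" where
  "nat_trans K G m m' T \<longleftrightarrow> continuous_map (sp K) (arr_top G) T
     \<and> (\<forall>y\<in>obj K. src (T y) = snd m y \<and> tgt G (T y) = snd m' y)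
     \<and> (\<forall>a\<in>arr K. comp G (arr_map m' a) (T (src a)) = comp G (T (tgt K a)) (arr_map m a))"

definition nat_iso :: "('k,'y) tg \<Rightarrow> ('g,'x) tg \<Rightarrow> ('k,'y,'g,'x) emap \<Rightarrow> ('k,'y,'g,'x) emap \<Rightarrow> bool" where
  "nat_iso K G m m' \<longleftrightarrow> (\<exists>T. nat_trans K G m m' T)"

definition ess_equiv :: "('k,'y) tg \<Rightarrow> ('g,'x) tg \<Rightarrow> ('k,'y,'g,'x) emap \<Rightarrow> bool" where
  "ess_equiv K G e \<longleftrightarrow> emap K G e
     \<and> (let FP = {(a,y). a \<in> arr G \<and> y \<in> obj K \<and> tgt G a = snd e y} in
          open_map (subtopology (prod_topology (arr_top G) (sp K)) FP) (sp G) (\<lambda>(a,y). src a)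
        \<and> (\<lambda>(a,y). src a) ` FP = obj G)
     \<and> (let PB = {(a,(y1,y2)). a \<in> arr G \<and> y1 \<in> obj K \<and> y2 \<in> obj K
                     \<and> src a = snd e y1 \<and> tgt G a = snd e y2} in
          homeomorphic_map (arr_top K)
            (subtopology (prod_topology (arr_top G) (prod_topology (sp K) (sp K))) PB)
            (\<lambda>b. (arr_map e b, (src b, tgt K b))))"

definition gen_map :: "('k,'y) tg \<Rightarrow> ('j,'z) tg \<Rightarrow> ('g,'x) tg
     \<Rightarrow> ('j,'z,'k,'y) emap \<Rightarrow> ('j,'z,'g,'x) emap \<Rightarrow> bool" where
  "gen_map K J G e f \<longleftrightarrow> tgrpd J \<and> ess_equiv J K e \<and> emap J G f"

definition two_iso_by :: "('k,'y) tg \<Rightarrow> ('g,'x) tg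
     \<Rightarrow> ('j,'z) tg \<Rightarrow> ('j,'z,'k,'y) emap \<Rightarrow> ('j,'z,'g,'x) emap
     \<Rightarrow> ('i,'w) tg \<Rightarrow> ('i,'w,'k,'y) emap \<Rightarrow> ('i,'w,'g,'x) emap
     \<Rightarrow> ('l,'v) tg \<Rightarrow> ('l,'v,'j,'z) emap \<Rightarrow> ('l,'v,'i,'w) emap \<Rightarrow> bool" where
  "two_iso_by K G J e f J' e' f' L u v \<longleftrightarrow> tgrpd L
     \<and> ess_equiv L J u \<and> ess_equiv L J' v
     \<and> nat_iso L K (mcomp e u) (mcomp e' v)
     \<and> nat_iso L G (mcomp f u) (mcomp f' v)"

text \<open>(e,f) \<Rightarrow> (e',f') witnessed by a translation groupoid L whose group and space
  live in the types 'l and 'v (given by the itself-arguments).\<close>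
definition two_iso_in :: "'l itself \<Rightarrow> 'v itself \<Rightarrow> ('k,'y) tg \<Rightarrow> ('g,'x) tg
     \<Rightarrow> ('j,'z) tg \<Rightarrow> ('j,'z,'k,'y) emap \<Rightarrow> ('j,'z,'g,'x) emap
     \<Rightarrow> ('i,'w) tg \<Rightarrow> ('i,'w,'k,'y) emap \<Rightarrow> ('i,'w,'g,'x) emap \<Rightarrow> bool" where
  "two_iso_in (_::'l itself) (_::'v itself) K G J e f J' e' f' \<longleftrightarrow>
     (\<exists>(L::('l,'v) tg) u v. two_iso_by K G J e f J' e' f' L u v)"

definition unit_interval :: "real topology" where
  "unit_interval = top_of_set {0..1}"

definition paths :: "'x topology \<Rightarrow> (real \<Rightarrow> 'x) set" where
  "paths X = {\<alpha>. continuous_map unit_interval X \<alpha> \<and> (\<forall>t. t \<notin> {0..1} \<longrightarrow> \<alpha> t = undefined)}"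

text \<open>Compact-open topology on X^I (subbasis: \<alpha> with \<alpha>(C) \<subseteq> U, C compact, U open;
  C = {} gives the whole path space).\<close>
definition path_top :: "'x topology \<Rightarrow> (real \<Rightarrow> 'x) topology" where
  "path_top X = topology_generated_by
     {{\<alpha> \<in> paths X. \<alpha> ` C \<subseteq> U} | C U. compactin unit_interval C \<and> openin X U}"

definition path_act :: "('g \<Rightarrow> 'x \<Rightarrow> 'x) \<Rightarrow> 'g \<Rightarrow> (real \<Rightarrow> 'x) \<Rightarrow> (real \<Rightarrow> 'x)" where
  "path_act a g \<alpha> = (\<lambda>t. if t \<in> {0..1} then a g (\<alpha> t) else undefined)"

definition path_tg :: "('g,'x) tg \<Rightarrow> ('g, real \<Rightarrow> 'x) tg" where
  "path_tg G = (grp G, path_act (act G), path_top (sp G))"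

definition ev :: "real \<Rightarrow> ('g, real \<Rightarrow> 'x, 'g, 'x) emap" where
  "ev i = (id, \<lambda>\<alpha>. \<alpha> i)"

text \<open>Homotopy of generalized maps (e,f) from K via J and (e',f') from K via J' to G:
  a span K \<leftarrow>\<epsilon>\<leftarrow> \<tilde>K\<ltimes>\<tilde>Y \<rightarrow>H\<rightarrow> G\<ltimes>X^I with (e,f) \<Rightarrow> (\<epsilon>, ev_0 H) and (e',f') \<Rightarrow> (\<epsilon>, ev_1 H).\<close>
definition homotopic_in :: "'a itself \<Rightarrow> 'b itself \<Rightarrow> 'l1 itself \<Rightarrow> 'v1 itself
     \<Rightarrow> 'l2 itself \<Rightarrow> 'v2 itself \<Rightarrow> ('k,'y) tg \<Rightarrow> ('g,'x) tg
     \<Rightarrow> ('j,'z) tg \<Rightarrow> ('j,'z,'k,'y) emap \<Rightarrow> ('j,'z,'g,'x) emap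
     \<Rightarrow> ('i,'w) tg \<Rightarrow> ('i,'w,'k,'y) emap \<Rightarrow> ('i,'w,'g,'x) emap \<Rightarrow> bool" where
  "homotopic_in (_::'a itself) (_::'b itself) (_::'l1 itself) (_::'v1 itself)
       (_::'l2 itself) (_::'v2 itself) K G J e f J' e' f' \<longleftrightarrow>
     (\<exists>(Jt::('a,'b) tg) \<epsilon> H. tgrpd Jt \<and> ess_equiv Jt K \<epsilon> \<and> emap Jt (path_tg G) H
        \<and> two_iso_in TYPE('l1) TYPE('v1) K G J e f Jt \<epsilon> (mcomp (ev 0) H)
        \<and> two_iso_in TYPE('l2) TYPE('v2) K G J' e' f' Jt \<epsilon> (mcomp (ev 1) H))"

end

theory Submission
  imports Defs
begin



lemma tg_facts:
  assumes C: "tgrpd C"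
  shows "group (grp C)"
    and "\<And>g x. g \<in> carrier (grp C) \<Longrightarrow> x \<in> obj C \<Longrightarrow> act C g x \<in> obj C"
    and "\<And>g x. g \<in> carrier (grp C) \<Longrightarrow> x \<in> obj C \<Longrightarrow> act C (inv\<^bsub>grp C\<^esub> g) (act C g x) = x"
    and "\<And>g x. g \<in> carrier (grp C) \<Longrightarrow> x \<in> obj C \<Longrightarrow> act C g (act C (inv\<^bsub>grp C\<^esub> g) x) = x"
    and "\<And>g. g \<in> carrier (grp C) \<Longrightarrow> continuous_map (sp C) (sp C) (act C g)"
    and "\<And>x. x \<in> obj C \<Longrightarrow> act C \<one>\<^bsub>grp C\<^esub> x = x"
    and "\<And>g h x. g \<in> carrier (grp C) \<Longrightarrow> h \<in> carrier (grp C) \<Longrightarrow> x \<in> obj C \<Longrightarrow>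
            act C (g \<otimes>\<^bsub>grp C\<^esub> h) x = act C g (act C h x)"
proof -
  have grp: "group (grp C)" and un: "\<forall>x\<in>obj C. act C \<one>\<^bsub>grp C\<^esub> x = x"
    and mul: "\<forall>g\<in>carrier (grp C). \<forall>h\<in>carrier (grp C). \<forall>x\<in>obj C.
           act C (g \<otimes>\<^bsub>grp C\<^esub> h) x = act C g (act C h x)"
    and cont: "\<forall>g\<in>carrier (grp C). continuous_map (sp C) (sp C) (act C g)"
    using C unfolding tgrpd_def by auto
  show "group (grp C)" by (rule grp)
  show cl: "\<And>g x. g \<in> carrier (grp C) \<Longrightarrow> x \<in> obj C \<Longrightarrow> act C g x \<in> obj C"
    using cont unfolding obj_def by (meson continuous_map_image_subset_topspace image_subset_iff)
  show "\<And>g x. g \<in> carrier (grp C) \<Longrightarrow> x \<in> obj C \<Longrightarrow> act C (inv\<^bsub>grp C\<^esub> g) (act C g x) = x"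
    using mul un grp by (metis group.inv_closed group.l_inv)
  show "\<And>g x. g \<in> carrier (grp C) \<Longrightarrow> x \<in> obj C \<Longrightarrow> act C g (act C (inv\<^bsub>grp C\<^esub> g) x) = x"
    using mul un grp by (metis group.inv_closed group.r_inv)
  show "\<And>g. g \<in> carrier (grp C) \<Longrightarrow> continuous_map (sp C) (sp C) (act C g)" using cont by auto
  show "\<And>x. x \<in> obj C \<Longrightarrow> act C \<one>\<^bsub>grp C\<^esub> x = x" using un by auto
  show "\<And>g h x. g \<in> carrier (grp C) \<Longrightarrow> h \<in> carrier (grp C) \<Longrightarrow> x \<in> obj C \<Longrightarrow>
            act C (g \<otimes>\<^bsub>grp C\<^esub> h) x = act C g (act C h x)" using mul by auto
qed

lemma tgt_cont:
  assumes C: "tgrpd C"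
  shows "continuous_map (arr_top C) (sp C) (tgt C)"
proof -
  note F = tg_facts[OF C]
  have ts: "topspace (arr_top C) = carrier (grp C) \<times> obj C"
    unfolding arr_top_def obj_def by simp
  show ?thesis unfolding continuous_map_def
  proof (intro conjI allI impI)
    show "tgt C \<in> topspace (arr_top C) \<rightarrow> topspace (sp C)"
      using F(2) unfolding ts tgt_def obj_def by auto
  next
    fix V assume V: "openin (sp C) V"
    have eq: "{x \<in> topspace (arr_top C). tgt C x \<in> V} =
        (\<Union>g\<in>carrier (grp C). {g} \<times> {x \<in> topspace (sp C). act C g x \<in> V})"
      unfolding ts tgt_def obj_def by auto
    show "openin (arr_top C) {x \<in> topspace (arr_top C). tgt C x \<in> V}"
      unfolding eq unfolding arr_top_def
      apply (rule openin_Union)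
      using F(5) V by (auto simp: openin_prod_Times_iff openin_continuous_map_preimage[OF F(5) V])
  qed
qed

lemma src_cont: "continuous_map (arr_top C) (sp C) src"
  unfolding arr_top_def src_def[abs_def] by (rule continuous_map_snd)


lemma emap_facts:
  assumes "emap A C e"
  shows "\<And>k. k \<in> carrier (grp A) \<Longrightarrow> fst e k \<in> carrier (grp C)"
    and "\<And>y. y \<in> obj A \<Longrightarrow> snd e y \<in> obj C"
    and "continuous_map (sp A) (sp C) (snd e)"
    and "\<And>k y. k \<in> carrier (grp A) \<Longrightarrow> y \<in> obj A \<Longrightarrow> snd e (act A k y) = act C (fst e k) (snd e y)"
    and "fst e \<in> hom (grp A) (grp C)"
  using assms unfolding emap_def obj_def
  by (auto intro: hom_in_carrier dest: continuous_map_image_subset_topspace)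

lemma ess_open:
  assumes C: "tgrpd C" and E: "ess_equiv A C e" and U: "openin (sp A) U"
  shows "openin (sp C) (snd e ` U)"
proof -
  note F = tg_facts[OF C]
  define FP where "FP = {(a,y). a \<in> arr C \<and> y \<in> obj A \<and> tgt C a = snd e y}"
  have om: "open_map (subtopology (prod_topology (arr_top C) (sp A)) FP) (sp C) (\<lambda>(a,y). src a)"
    using E unfolding ess_equiv_def FP_def Let_def by auto
  have em: "emap A C e" using E unfolding ess_equiv_def by auto
  note EF = emap_facts[OF em]
  have one: "\<one>\<^bsub>grp C\<^esub> \<in> carrier (grp C)" by (simp add: F(1) group.is_monoid monoid.one_closed)
  define W where "W = FP \<inter> (({\<one>\<^bsub>grp C\<^esub>} \<times> topspace (sp C)) \<times> U)"
  have "openin (prod_topology (arr_top C) (sp A)) (({\<one>\<^bsub>grp C\<^esub>} \<times> topspace (sp C)) \<times> U)"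
    using U one unfolding arr_top_def by (simp add: openin_prod_Times_iff)
  then have "openin (subtopology (prod_topology (arr_top C) (sp A)) FP) W"
    unfolding W_def by (rule openin_subtopology_Int2)
  then have o: "openin (sp C) ((\<lambda>(a,y). src a) ` W)" using om unfolding open_map_def by blast
  have Usub: "U \<subseteq> obj A" using openin_subset[OF U] unfolding obj_def by auto
  have "(\<lambda>(a,y). src a) ` W = snd e ` U"
  proof
    show "(\<lambda>(a,y). src a) ` W \<subseteq> snd e ` U"
      unfolding W_def FP_def src_def tgt_def arr_def obj_def using F(6) unfolding obj_def by force
  next
    show "snd e ` U \<subseteq> (\<lambda>(a,y). src a) ` W"
    proof
      fix x assume "x \<in> snd e ` U"
      then obtain y where y: "y \<in> U" "x = snd e y" by blast
      have "((\<one>\<^bsub>grp C\<^esub>, x), y) \<in> W"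
        unfolding W_def FP_def arr_def tgt_def using y Usub EF(2) F(6) one unfolding obj_def by auto
      then show "x \<in> (\<lambda>(a,y). src a) ` W" unfolding src_def by force
    qed
  qed
  then show ?thesis using o by simp
qed

lemma cond_i:
  assumes C: "tgrpd C" and em: "emap A C e"
   and op: "\<And>U. openin (sp A) U \<Longrightarrow> openin (sp C) (snd e ` U)"
   and sur: "\<And>x. x \<in> obj C \<Longrightarrow> \<exists>g\<in>carrier (grp C). \<exists>a\<in>obj A. act C g x = snd e a"
  shows "let FP = {(c,y). c \<in> arr C \<and> y \<in> obj A \<and> tgt C c = snd e y} in
     open_map (subtopology (prod_topology (arr_top C) (sp A)) FP) (sp C) (\<lambda>(c,y). src c)
     \<and> (\<lambda>(c,y). src c) ` FP = obj C"
proof -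
  note F = tg_facts[OF C]
  note EF = emap_facts[OF em]
  define FP where "FP = {(c,y). c \<in> arr C \<and> y \<in> obj A \<and> tgt C c = snd e y}"
  define P where "P = prod_topology (arr_top C) (sp A)"
  have "open_map (subtopology P FP) (sp C) (\<lambda>(c,y). src c)"
    unfolding open_map_def
  proof (intro allI impI)
    fix W assume W: "openin (subtopology P FP) W"
    have WFP: "W \<subseteq> FP" using openin_subset[OF W] by simp
    define ig where "ig g = inv\<^bsub>grp C\<^esub> g" for g
    define U where "U g = {a \<in> topspace (sp A). ((g, act C (ig g) (snd e a)), a) \<in> W}" for g
    have img: "(\<lambda>(c,y). src c) ` W = (\<Union>g\<in>carrier (grp C). act C (ig g) ` (snd e ` U g))"
    proof
      show "(\<lambda>(c,y). src c) ` W \<subseteq> (\<Union>g\<in>carrier (grp C). act C (ig g) ` (snd e ` U g))"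
      proof
        fix x assume "x \<in> (\<lambda>(c,y). src c) ` W"
        then obtain g a where ga: "((g,x),a) \<in> W" unfolding src_def by auto
        then have in1: "g \<in> carrier (grp C)" "x \<in> obj C" "a \<in> obj A" "act C g x = snd e a"
          using WFP unfolding FP_def arr_def tgt_def by auto
        then have xe: "x = act C (ig g) (snd e a)" using F(3) unfolding ig_def by metis
        then have "a \<in> U g" using ga in1 unfolding U_def obj_def by auto
        then show "x \<in> (\<Union>g\<in>carrier (grp C). act C (ig g) ` (snd e ` U g))" using xe in1 by blast
      qed
    next
      show "(\<Union>g\<in>carrier (grp C). act C (ig g) ` (snd e ` U g)) \<subseteq> (\<lambda>(c,y). src c) ` W"
        unfolding U_def src_def by force
    qed
    have "openin (sp C) (act C (ig g) ` (snd e ` U g))" if g: "g \<in> carrier (grp C)" for g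
    proof -
      have igc: "ig g \<in> carrier (grp C)" unfolding ig_def using g F(1) by (simp add: group.inv_closed)
      define \<phi> where "\<phi> a = ((g, act C (ig g) (snd e a)), a)" for a
      have "continuous_map (sp A) P \<phi>"
        unfolding \<phi>_def P_def arr_top_def
        using g by (auto intro!: continuous_map_pairedI continuous_map_compose[OF EF(3) F(5)[OF igc], unfolded o_def])
      moreover have "\<phi> \<in> topspace (sp A) \<rightarrow> FP"
        unfolding \<phi>_def FP_def arr_def tgt_def using g igc F(2) F(4) EF(2) unfolding ig_def obj_def by auto
      ultimately have "continuous_map (sp A) (subtopology P FP) \<phi>"
        by (simp add: continuous_map_in_subtopology)
      then have "openin (sp A) (U g)"
        using openin_continuous_map_preimage[OF _ W] unfolding U_def \<phi>_def by blast
      then have o1: "openin (sp C) (snd e ` U g)" by (rule op)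
      have "homeomorphic_maps (sp C) (sp C) (act C (ig g)) (act C g)"
        unfolding homeomorphic_maps_def using F(5)[OF igc] F(5)[OF g] F(3)[OF g] F(4)[OF g]
        unfolding ig_def obj_def by auto
      then have "open_map (sp C) (sp C) (act C (ig g))"
        using homeomorphic_imp_open_map homeomorphic_map_maps by blast
      then show ?thesis using o1 unfolding open_map_def by blast
    qed
    then show "openin (sp C) ((\<lambda>(c,y). src c) ` W)" unfolding img by blast
  qed
  moreover have "(\<lambda>(c,y). src c) ` FP = obj C"
  proof
    show "(\<lambda>(c,y). src c) ` FP \<subseteq> obj C" unfolding FP_def arr_def src_def by auto
  next
    show "obj C \<subseteq> (\<lambda>(c,y). src c) ` FP"
    proof
      fix x assume x: "x \<in> obj C"
      then obtain g a where "g \<in> carrier (grp C)" "a \<in> obj A" "act C g x = snd e a" using sur by blast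
      then have "((g,x),a) \<in> FP" unfolding FP_def arr_def tgt_def using x by auto
      then show "x \<in> (\<lambda>(c,y). src c) ` FP" unfolding src_def by force
    qed
  qed
  ultimately show ?thesis unfolding FP_def P_def Let_def by blast
qed


lemma topspace_arr_top [simp]: "topspace (arr_top C) = arr C"
  unfolding arr_top_def arr_def obj_def by simp

lemma arr_map_cont:
  assumes "emap A C e"
  shows "continuous_map (arr_top A) (arr_top C) (arr_map e)"
proof -
  note EF = emap_facts[OF assms]
  have c1: "continuous_map (arr_top A) (discrete_topology (carrier (grp C))) (\<lambda>b. fst e (fst b))"
  proof -
    have d: "continuous_map (discrete_topology (carrier (grp A))) (discrete_topology (carrier (grp C))) (fst e)"
      using EF(1) by simp
    show ?thesis using continuous_map_compose[OF continuous_map_fst d]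
      unfolding arr_top_def by (auto simp: o_def)
  qed
  have c2: "continuous_map (arr_top A) (sp C) (\<lambda>b. snd e (snd b))"
    using continuous_map_compose[OF continuous_map_snd EF(3)]
    unfolding arr_top_def by (auto simp: o_def)
  show ?thesis unfolding arr_map_def[abs_def]
    using c1 c2 unfolding arr_top_def[of C] by (intro continuous_map_pairedI) auto
qed

lemma tgt_closed: "tgrpd C \<Longrightarrow> b \<in> arr C \<Longrightarrow> tgt C b \<in> obj C"
  using tg_facts(2)[of C] unfolding arr_def tgt_def by auto

lemma arr_map_facts:
  assumes "emap A C e" and b: "b \<in> arr A"
  shows "arr_map e b \<in> arr C" "src (arr_map e b) = snd e (src b)"
    "tgt C (arr_map e b) = snd e (tgt A b)"
  using emap_facts[OF assms(1)] b unfolding arr_map_def arr_def src_def tgt_def by auto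

lemma emap_comp:
  assumes "emap A B e1" "emap B C e2"
  shows "emap A C (mcomp e2 e1)"
  using emap_facts[OF assms(1)] emap_facts[OF assms(2)] unfolding emap_def mcomp_def
  by (auto intro: hom_compose continuous_map_compose)

lemma ess_id:
  fixes L :: "('a,'b) tg"
  assumes L: "tgrpd L"
  shows "ess_equiv L L (id,id)"
proof -
  define e where "e = (id::'a\<Rightarrow>'a, id::'b\<Rightarrow>'b)"

  note F = tg_facts[OF L]
  have em: "emap L L e" unfolding e_def emap_def hom_def by auto
  have one: "\<one>\<^bsub>grp L\<^esub> \<in> carrier (grp L)" by (simp add: F(1) group.is_monoid monoid.one_closed)
  have op: "\<And>U. openin (sp L) U \<Longrightarrow> openin (sp L) (snd e ` U)" by (simp add: e_def)
  have sur: "\<And>x. x \<in> obj L \<Longrightarrow> \<exists>g\<in>carrier (grp L). \<exists>a\<in>obj L. act L g x = snd e a"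
  proof -
    fix x assume x: "x \<in> obj L"
    show "\<exists>g\<in>carrier (grp L). \<exists>a\<in>obj L. act L g x = snd e a"
      using x one F(6)[OF x] unfolding e_def by (intro bexI[of _ "\<one>\<^bsub>grp L\<^esub>"] bexI[of _ x]) auto
  qed
  have i: "let FP = {(c,y). c \<in> arr L \<and> y \<in> obj L \<and> tgt L c = snd e y} in
     open_map (subtopology (prod_topology (arr_top L) (sp L)) FP) (sp L) (\<lambda>(c,y). src c)
     \<and> (\<lambda>(c,y). src c) ` FP = obj L"
    by (rule cond_i[OF L em op sur])
  define PB where "PB = {(a,(y1,y2)). a \<in> arr L \<and> y1 \<in> obj L \<and> y2 \<in> obj L
                     \<and> src a = snd e y1 \<and> tgt L a = snd e y2}"
  define Q where "Q = prod_topology (arr_top L) (prod_topology (sp L) (sp L))"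
  have tsQ: "topspace Q = arr L \<times> (obj L \<times> obj L)" unfolding Q_def obj_def by simp
  have PBsub: "PB \<subseteq> topspace Q" unfolding PB_def tsQ by auto
  have "homeomorphic_maps (arr_top L) (subtopology Q PB) (\<lambda>b. (arr_map e b, (src b, tgt L b))) fst"
    unfolding homeomorphic_maps_def
  proof (intro conjI)
    have "continuous_map (arr_top L) Q (\<lambda>b. (arr_map e b, (src b, tgt L b)))"
      unfolding Q_def using arr_map_cont[OF em] src_cont[of L] tgt_cont[OF L]
      by (intro continuous_map_pairedI) auto
    moreover have "(\<lambda>b. (arr_map e b, (src b, tgt L b))) \<in> topspace (arr_top L) \<rightarrow> PB"
      unfolding PB_def using arr_map_facts[OF em] tgt_closed[OF L] by (auto simp: src_def e_def arr_map_def arr_def)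
    ultimately show "continuous_map (arr_top L) (subtopology Q PB) (\<lambda>b. (arr_map e b, (src b, tgt L b)))"
      by (simp add: continuous_map_in_subtopology)
    show "continuous_map (subtopology Q PB) (arr_top L) fst"
      unfolding Q_def by (rule continuous_map_from_subtopology) (rule continuous_map_fst)
    show "\<forall>x\<in>topspace (arr_top L). fst (arr_map e x, src x, tgt L x) = x"
      by (simp add: arr_map_def e_def)
    show "\<forall>y\<in>topspace (subtopology Q PB). (arr_map e (fst y), src (fst y), tgt L (fst y)) = y"
      unfolding PB_def by (auto simp: arr_map_def e_def)
  qed
  then have ii: "homeomorphic_map (arr_top L) (subtopology Q PB) (\<lambda>b. (arr_map e b, (src b, tgt L b)))"
    using homeomorphic_map_maps by blast
  show ?thesis using em i ii unfolding ess_equiv_def e_def[symmetric] unfolding PB_def Q_def Let_def by blast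
qed


lemma ess_sur:
  assumes E: "ess_equiv A C e" and x: "x \<in> obj C"
  shows "\<exists>g\<in>carrier (grp C). \<exists>a\<in>obj A. act C g x = snd e a"
proof -
  have "(\<lambda>(c,y). src c) ` {(c,y). c \<in> arr C \<and> y \<in> obj A \<and> tgt C c = snd e y} = obj C"
    using E unfolding ess_equiv_def Let_def by auto
  then obtain c a where "c \<in> arr C" "a \<in> obj A" "tgt C c = snd e a" "x = src c" using x by force
  then show ?thesis unfolding arr_def tgt_def src_def by auto
qed

lemma ess_comp:
  fixes A :: "('ka,'ya) tg" and B :: "('kb,'yb) tg" and C :: "('kc,'yc) tg"
  assumes A: "tgrpd A" and B: "tgrpd B" and C: "tgrpd C"
    and E1: "ess_equiv A B e1" and E2: "ess_equiv B C e2"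
  shows "ess_equiv A C (mcomp e2 e1)"
proof -
  have em1: "emap A B e1" using E1 unfolding ess_equiv_def by auto
  have em2: "emap B C e2" using E2 unfolding ess_equiv_def by auto
  have em: "emap A C (mcomp e2 e1)" by (rule emap_comp[OF em1 em2])
  note FC = tg_facts[OF C] and FB = tg_facts[OF B]
  note EF1 = emap_facts[OF em1] and EF2 = emap_facts[OF em2]
  have op: "\<And>U. openin (sp A) U \<Longrightarrow> openin (sp C) (snd (mcomp e2 e1) ` U)"
  proof -
    fix U assume U: "openin (sp A) U"
    have "snd (mcomp e2 e1) ` U = snd e2 ` (snd e1 ` U)" unfolding mcomp_def by auto
    then show "openin (sp C) (snd (mcomp e2 e1) ` U)"
      using ess_open[OF C E2 ess_open[OF B E1 U]] by simp
  qed
  have sur: "\<And>x. x \<in> obj C \<Longrightarrow> \<exists>g\<in>carrier (grp C). \<exists>a\<in>obj A. act C g x = snd (mcomp e2 e1) a"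
  proof -
    fix x assume x: "x \<in> obj C"
    obtain g y where gy: "g \<in> carrier (grp C)" "y \<in> obj B" "act C g x = snd e2 y"
      using ess_sur[OF E2 x] by blast
    obtain h a where ha: "h \<in> carrier (grp B)" "a \<in> obj A" "act B h y = snd e1 a"
      using ess_sur[OF E1 gy(2)] by blast
    have hc: "fst e2 h \<in> carrier (grp C)" by (rule EF2(1)[OF ha(1)])
    have "act C (fst e2 h \<otimes>\<^bsub>grp C\<^esub> g) x = act C (fst e2 h) (act C g x)"
      using FC(7)[OF hc gy(1) x] .
    also have "\<dots> = snd e2 (act B h y)" using gy EF2(4)[OF ha(1) gy(2)] by simp
    also have "\<dots> = snd (mcomp e2 e1) a" using ha unfolding mcomp_def by simp
    finally show "\<exists>g\<in>carrier (grp C). \<exists>a\<in>obj A. act C g x = snd (mcomp e2 e1) a"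
      using hc gy(1) ha(2) FC(1) by (meson group.is_monoid monoid.m_closed)
  qed
  have i: "let FP = {(c,y). c \<in> arr C \<and> y \<in> obj A \<and> tgt C c = snd (mcomp e2 e1) y} in
     open_map (subtopology (prod_topology (arr_top C) (sp A)) FP) (sp C) (\<lambda>(c,y). src c)
     \<and> (\<lambda>(c,y). src c) ` FP = obj C"
    by (rule cond_i[OF C em op sur])
  define PB1 where "PB1 = {(a,(y1,y2)). a \<in> arr B \<and> y1 \<in> obj A \<and> y2 \<in> obj A
                     \<and> src a = snd e1 y1 \<and> tgt B a = snd e1 y2}"
  define Q1 where "Q1 = prod_topology (arr_top B) (prod_topology (sp A) (sp A))"
  define PB2 where "PB2 = {(a,(y1,y2)). a \<in> arr C \<and> y1 \<in> obj B \<and> y2 \<in> obj B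
                     \<and> src a = snd e2 y1 \<and> tgt C a = snd e2 y2}"
  define Q2 where "Q2 = prod_topology (arr_top C) (prod_topology (sp B) (sp B))"
  define PB where "PB = {(a,(y1,y2)). a \<in> arr C \<and> y1 \<in> obj A \<and> y2 \<in> obj A
                     \<and> src a = snd (mcomp e2 e1) y1 \<and> tgt C a = snd (mcomp e2 e1) y2}"
  define Q where "Q = prod_topology (arr_top C) (prod_topology (sp A) (sp A))"
  define \<Phi>1 where "\<Phi>1 = (\<lambda>b. (arr_map e1 b, (src b, tgt A b)))"
  define \<Phi>2 where "\<Phi>2 = (\<lambda>b. (arr_map e2 b, (src b, tgt B b)))"
  define \<Phi> where "\<Phi> = (\<lambda>b. (arr_map (mcomp e2 e1) b, (src b, tgt A b)))"
  have "homeomorphic_map (arr_top A) (subtopology Q1 PB1) \<Phi>1"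
    using E1 unfolding ess_equiv_def Let_def PB1_def Q1_def \<Phi>1_def by auto
  then obtain \<Psi>1 where H1: "homeomorphic_maps (arr_top A) (subtopology Q1 PB1) \<Phi>1 \<Psi>1"
    using homeomorphic_map_maps by blast
  have "homeomorphic_map (arr_top B) (subtopology Q2 PB2) \<Phi>2"
    using E2 unfolding ess_equiv_def Let_def PB2_def Q2_def \<Phi>2_def by auto
  then obtain \<Psi>2 where H2: "homeomorphic_maps (arr_top B) (subtopology Q2 PB2) \<Phi>2 \<Psi>2"
    using homeomorphic_map_maps by blast
  have ts1: "topspace (subtopology Q1 PB1) = PB1"
    unfolding Q1_def PB1_def obj_def by auto
  have ts2: "topspace (subtopology Q2 PB2) = PB2"
    unfolding Q2_def PB2_def obj_def by auto
  have ts: "topspace (subtopology Q PB) = PB"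
    unfolding Q_def PB_def obj_def by auto
  have c\<Psi>1: "continuous_map (subtopology Q1 PB1) (arr_top A) \<Psi>1"
    and inv1a: "\<And>b. b \<in> arr A \<Longrightarrow> \<Psi>1 (\<Phi>1 b) = b"
    and inv1b: "\<And>p. p \<in> PB1 \<Longrightarrow> \<Phi>1 (\<Psi>1 p) = p"
    using H1 unfolding homeomorphic_maps_def ts1 by auto
  have c\<Psi>2: "continuous_map (subtopology Q2 PB2) (arr_top B) \<Psi>2"
    and inv2a: "\<And>b. b \<in> arr B \<Longrightarrow> \<Psi>2 (\<Phi>2 b) = b"
    and inv2b: "\<And>p. p \<in> PB2 \<Longrightarrow> \<Phi>2 (\<Psi>2 p) = p"
    using H2 unfolding homeomorphic_maps_def ts2 by auto
  have \<Psi>1_in: "\<And>p. p \<in> PB1 \<Longrightarrow> \<Psi>1 p \<in> arr A"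
    using continuous_map_image_subset_topspace[OF c\<Psi>1] ts1 by auto
  have \<Psi>2_in: "\<And>p. p \<in> PB2 \<Longrightarrow> \<Psi>2 p \<in> arr B"
    using continuous_map_image_subset_topspace[OF c\<Psi>2] ts2 by auto
  define ch where "ch = (\<lambda>(p::('kc \<times> 'yc) \<times> 'ya \<times> 'ya). (fst p, (snd e1 (fst (snd p)), snd e1 (snd (snd p)))))"
  define \<Psi> where "\<Psi> = (\<lambda>p. \<Psi>1 (\<Psi>2 (ch p), snd p))"
  have ch_in: "\<And>p. p \<in> PB \<Longrightarrow> ch p \<in> PB2"
    unfolding PB_def PB2_def ch_def mcomp_def using EF1(2) by auto
  have \<Psi>2ch: "\<And>p. p \<in> PB \<Longrightarrow> (\<Psi>2 (ch p), snd p) \<in> PB1"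
  proof -
    fix p assume p: "p \<in> PB"
    have "\<Phi>2 (\<Psi>2 (ch p)) = ch p" using inv2b ch_in p by blast
    then show "(\<Psi>2 (ch p), snd p) \<in> PB1"
      using p \<Psi>2_in[OF ch_in[OF p]] unfolding PB_def PB1_def \<Phi>2_def ch_def by auto
  qed
  have "homeomorphic_maps (arr_top A) (subtopology Q PB) \<Phi> \<Psi>"
    unfolding homeomorphic_maps_def
  proof (intro conjI ballI)
    have "continuous_map (arr_top A) Q \<Phi>"
      unfolding Q_def \<Phi>_def using arr_map_cont[OF em] src_cont[of A] tgt_cont[OF A]
      by (intro continuous_map_pairedI) auto
    moreover have "\<Phi> \<in> topspace (arr_top A) \<rightarrow> PB"
      unfolding PB_def \<Phi>_def using arr_map_facts[OF em] tgt_closed[OF A]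
      by (auto simp: src_def arr_def)
    ultimately show "continuous_map (arr_top A) (subtopology Q PB) \<Phi>"
      by (simp add: continuous_map_in_subtopology)
  next
    have cch: "continuous_map (subtopology Q PB) (subtopology Q2 PB2) ch"
    proof -
      have "continuous_map (subtopology Q PB) Q2 ch"
        unfolding ch_def Q2_def
      proof (intro continuous_map_pairedI)
        show "continuous_map (subtopology Q PB) (arr_top C) fst"
          unfolding Q_def by (intro continuous_map_from_subtopology continuous_map_fst)
        have s: "continuous_map (subtopology Q PB) (prod_topology (sp A) (sp A)) snd"
          unfolding Q_def by (intro continuous_map_from_subtopology continuous_map_snd)
        show "continuous_map (subtopology Q PB) (sp B) (\<lambda>x. snd e1 (fst (snd x)))"
          using continuous_map_compose[OF continuous_map_compose[OF s continuous_map_fst] EF1(3)]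
          by (simp add: o_def)
        show "continuous_map (subtopology Q PB) (sp B) (\<lambda>x. snd e1 (snd (snd x)))"
          using continuous_map_compose[OF continuous_map_compose[OF s continuous_map_snd] EF1(3)]
          by (simp add: o_def)
      qed
      then show ?thesis using ch_in ts by (auto simp: continuous_map_in_subtopology)
    qed
    have c2: "continuous_map (subtopology Q PB) (subtopology Q1 PB1) (\<lambda>p. (\<Psi>2 (ch p), snd p))"
    proof -
      have "continuous_map (subtopology Q PB) Q1 (\<lambda>p. (\<Psi>2 (ch p), snd p))"
        unfolding Q1_def
      proof (intro continuous_map_pairedI)
        show "continuous_map (subtopology Q PB) (arr_top B) (\<lambda>p. \<Psi>2 (ch p))"
          using continuous_map_compose[OF cch c\<Psi>2] by (simp add: o_def)
        show "continuous_map (subtopology Q PB) (prod_topology (sp A) (sp A)) snd"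
          unfolding Q_def by (intro continuous_map_from_subtopology continuous_map_snd)
      qed
      then show ?thesis using \<Psi>2ch ts by (auto simp: continuous_map_in_subtopology)
    qed
    show "continuous_map (subtopology Q PB) (arr_top A) \<Psi>"
      using continuous_map_compose[OF c2 c\<Psi>1] unfolding \<Psi>_def by (simp add: o_def)
  next
    fix b assume "b \<in> topspace (arr_top A)"
    then have b: "b \<in> arr A" by simp
    have a1: "arr_map e1 b \<in> arr B" using arr_map_facts[OF em1 b] by simp
    have "ch (\<Phi> b) = \<Phi>2 (arr_map e1 b)"
      unfolding ch_def \<Phi>_def \<Phi>2_def using arr_map_facts[OF em1 b]
      by (simp add: arr_map_def mcomp_def)
    then have "\<Psi>2 (ch (\<Phi> b)) = arr_map e1 b" using inv2a[OF a1] by simp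
    then have "(\<Psi>2 (ch (\<Phi> b)), snd (\<Phi> b)) = \<Phi>1 b" unfolding \<Phi>_def \<Phi>1_def by simp
    then show "\<Psi> (\<Phi> b) = b" unfolding \<Psi>_def using inv1a[OF b] by simp
  next
    fix p assume "p \<in> topspace (subtopology Q PB)"
    then have p: "p \<in> PB" using ts by simp
    have e2: "\<Phi>2 (\<Psi>2 (ch p)) = ch p" using inv2b ch_in p by blast
    have e1: "\<Phi>1 (\<Psi> p) = (\<Psi>2 (ch p), snd p)" unfolding \<Psi>_def using inv1b[OF \<Psi>2ch[OF p]] .
    have "arr_map e1 (\<Psi> p) = \<Psi>2 (ch p)" "src (\<Psi> p) = fst (snd p)" "tgt A (\<Psi> p) = snd (snd p)"
      using e1 unfolding \<Phi>1_def by (auto dest: sym)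
    moreover have "arr_map e2 (\<Psi>2 (ch p)) = fst p" using e2 unfolding \<Phi>2_def ch_def by simp
    moreover have "arr_map (mcomp e2 e1) b = arr_map e2 (arr_map e1 b)" for b
      by (simp add: arr_map_def mcomp_def)
    ultimately show "\<Phi> (\<Psi> p) = p" unfolding \<Phi>_def by simp
  qed
  then have ii: "homeomorphic_map (arr_top A) (subtopology Q PB) \<Phi>"
    using homeomorphic_map_maps by blast
  show ?thesis unfolding ess_equiv_def using em i ii unfolding PB_def Q_def \<Phi>_def Let_def by blast
qed


lemma id_nat_iso:
  assumes G: "tgrpd G"
    and h: "\<forall>k\<in>carrier (grp L). fst m k \<in> carrier (grp G)"
    and c: "continuous_map (sp L) (sp G) (snd m)"
  shows "nat_iso L G m m"
proof -
  have grpG: "group (grp G)" and un: "\<forall>x\<in>obj G. act G \<one>\<^bsub>grp G\<^esub> x = x"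
    using G unfolding tgrpd_def by auto
  define T where "T = (\<lambda>y. (\<one>\<^bsub>grp G\<^esub>, snd m y))"
  have "continuous_map (sp L) (arr_top G) T"
    unfolding T_def arr_top_def
    by (rule continuous_map_pairedI) (auto simp: c monoid.one_closed[OF group.is_monoid[OF grpG]])
  moreover have "\<forall>y\<in>obj L. src (T y) = snd m y \<and> tgt G (T y) = snd m y"
    using un c unfolding T_def src_def tgt_def obj_def
    by (auto dest: continuous_map_image_subset_topspace)
  moreover have "\<forall>a\<in>arr L. comp G (arr_map m a) (T (src a)) = comp G (T (tgt L a)) (arr_map m a)"
    using h grpG unfolding T_def arr_def comp_def arr_map_def src_def
    by (auto simp: monoid.r_one[OF group.is_monoid[OF grpG]] monoid.l_one[OF group.is_monoid[OF grpG]])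
  ultimately show ?thesis unfolding nat_iso_def nat_trans_def by blast
qed

lemma hom_closed': "h \<in> hom A B \<Longrightarrow> x \<in> carrier A \<Longrightarrow> h x \<in> carrier B"
  unfolding hom_def by auto

theorem mainTheorem10:
  fixes K :: "('k,'y) tg" and G :: "('g,'x) tg"
    and J1 :: "('k1,'y1) tg" and \<sigma> :: "('k1,'y1,'k,'y) emap" and f :: "('k1,'y1,'g,'x) emap"
    and J2 :: "('k2,'y2) tg" and \<tau> :: "('k2,'y2,'k,'y) emap" and g :: "('k2,'y2,'g,'x) emap"
  assumes "tgrpd K" and "tgrpd G"
    and "gen_map K J1 G \<sigma> f"
    and "gen_map K J2 G \<tau> g"
    and "two_iso_in TYPE('lg) TYPE('ly) K G J1 \<sigma> f J2 \<tau> g"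
  shows "homotopic_in TYPE('lg) TYPE('ly) TYPE('lg) TYPE('ly) TYPE('lg) TYPE('ly)
           K G J1 \<sigma> f J2 \<tau> g"
proof -
  obtain L :: "('lg,'ly) tg" and u v where Luv: "two_iso_by K G J1 \<sigma> f J2 \<tau> g L u v"
    using assms(5) unfolding two_iso_in_def by blast
  obtain L :: "('lg,'ly) tg" and u v where Luv: "two_iso_by K G J1 \<sigma> f J2 \<tau> g L u v"
    using assms(5) unfolding two_iso_in_def by blast
  have J2: "tgrpd J2" "ess_equiv J2 K \<tau>" "emap J2 G g"
    using assms(4) unfolding gen_map_def by auto
  have Lt: "tgrpd L" and vE: "ess_equiv L J2 v" and uE: "ess_equiv L J1 u"
    and n1: "nat_iso L K (mcomp \<sigma> u) (mcomp \<tau> v)" and n2: "nat_iso L G (mcomp f u) (mcomp g v)"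
    using Luv unfolding two_iso_by_def by auto
  have vem: "emap L J2 v" using vE unfolding ess_equiv_def by auto
  have tem: "emap J2 K \<tau>" using J2(2) unfolding ess_equiv_def by auto
  define g' where "g' = mcomp g v"
  have g'em: "emap L G g'" unfolding g'_def by (rule emap_comp[OF vem J2(3)])
  have eps: "ess_equiv L K (mcomp \<tau> v)" by (rule ess_comp[OF Lt J2(1) assms(1) vE J2(2)])
  define H where "H = (fst g', \<lambda>z. \<lambda>t::real. if t \<in> {0..1} then snd g' z else undefined)"
  have ev0: "mcomp (ev 0) H = g'" and ev1: "mcomp (ev 1) H = g'"
    unfolding mcomp_def ev_def H_def by (cases g', auto simp: fun_eq_iff)+
  have gem: "fst g' \<in> hom (grp L) (grp G)" "continuous_map (sp L) (sp G) (snd g')"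
    "\<forall>k\<in>carrier (grp L). \<forall>y\<in>obj L. snd g' (act L k y) = act G (fst g' k) (snd g' y)"
    using g'em unfolding emap_def by auto
  have cont: "continuous_map (sp L) (path_top (sp G)) (snd H)"
    unfolding path_top_def
  proof (rule continuous_on_generated_topo)
    fix U assume "U \<in> {{\<alpha> \<in> paths (sp G). \<alpha> ` C \<subseteq> U} | C U. compactin unit_interval C \<and> openin (sp G) U}"
    then obtain C W where U: "U = {\<alpha> \<in> paths (sp G). \<alpha> ` C \<subseteq> W}" and C: "compactin unit_interval C"
      and W: "openin (sp G) W" by blast
    have Csub: "C \<subseteq> {0..1}" using compactin_subset_topspace[OF C] unfolding unit_interval_def by simp
    have inP: "snd H z \<in> paths (sp G)" if "z \<in> topspace (sp L)" for z
    proof -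
      have "snd g' z \<in> topspace (sp G)" using gem(2) that using continuous_map_image_subset_topspace by blast
      then have "continuous_map unit_interval (sp G) (\<lambda>t. snd g' z)" by simp
      then have "continuous_map unit_interval (sp G) (snd H z)"
        by (rule continuous_map_eq) (auto simp: H_def unit_interval_def)
      then show ?thesis unfolding paths_def H_def by auto
    qed
    show "openin (sp L) (snd H -` U \<inter> topspace (sp L))"
    proof (cases "C = {}")
      case True
      then have "snd H -` U \<inter> topspace (sp L) = topspace (sp L)" using inP U by auto
      then show ?thesis by simp
    next
      case False
      then have "snd H -` U \<inter> topspace (sp L) = snd g' -` W \<inter> topspace (sp L)"
        using inP U Csub by (auto simp: H_def subset_iff)
      moreover have "snd g' -` W \<inter> topspace (sp L) = {x \<in> topspace (sp L). snd g' x \<in> W}" by blast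
      ultimately show ?thesis using gem(2) W by (simp add: continuous_map_def)
    qed
  next
    show "snd H ` topspace (sp L) \<subseteq> \<Union> {{\<alpha> \<in> paths (sp G). \<alpha> ` C \<subseteq> U} | C U. compactin unit_interval C \<and> openin (sp G) U}"
    proof
      fix a assume "a \<in> snd H ` topspace (sp L)"
      then obtain z where z: "z \<in> topspace (sp L)" "a = snd H z" by blast
      have "snd g' z \<in> topspace (sp G)" using gem(2) z using continuous_map_image_subset_topspace by blast
      then have "continuous_map unit_interval (sp G) (\<lambda>t. snd g' z)" by simp
      then have "continuous_map unit_interval (sp G) (snd H z)"
        by (rule continuous_map_eq) (auto simp: H_def unit_interval_def)
      then have "a \<in> paths (sp G)" unfolding paths_def H_def z by auto
      then have "a \<in> {\<alpha> \<in> paths (sp G). \<alpha> ` {} \<subseteq> topspace (sp G)}" by simp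
      moreover have "compactin unit_interval {}" by simp
      ultimately show "a \<in> \<Union> {{\<alpha> \<in> paths (sp G). \<alpha> ` C \<subseteq> U} | C U. compactin unit_interval C \<and> openin (sp G) U}"
        by blast
    qed
  qed
  have emH: "emap L (path_tg G) H"
    unfolding emap_def path_tg_def grp_def sp_def act_def
    using gem cont unfolding grp_def sp_def act_def obj_def
    by (auto simp: H_def path_act_def fun_eq_iff)
  have idE: "ess_equiv L L (id,id)" by (rule ess_id[OF Lt])
  have mid: "\<And>m. mcomp m (id,id) = m" unfolding mcomp_def by auto
  have tau: "nat_iso L K (mcomp \<tau> v) (mcomp \<tau> v)"
    apply (rule id_nat_iso[OF assms(1)])
    using vem tem unfolding emap_def mcomp_def
    by (auto intro: hom_closed' continuous_map_compose)
  have gg: "nat_iso L G g' g'"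
    apply (rule id_nat_iso[OF assms(2)])
    using g'em unfolding emap_def
    by (auto intro: hom_closed')
  have "two_iso_by K G J1 \<sigma> f L (mcomp \<tau> v) (mcomp (ev 0) H) L u (id,id)"
    using Lt uE idE n1 n2 unfolding ev0 two_iso_by_def mid g'_def by auto
  moreover have "two_iso_by K G J2 \<tau> g L (mcomp \<tau> v) (mcomp (ev 1) H) L v (id,id)"
    using Lt vE idE tau gg unfolding ev1 two_iso_by_def mid g'_def by auto
  ultimately show ?thesis
    unfolding homotopic_in_def two_iso_in_def using Lt eps emH by blast
qed

end
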